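(* Under Assumption A, for every $k\in[K]$, $$\Theta_k-\Theta_0=(H^\top B_k^\top\mathbf e_{i_k})^{\otimes 2}-(H^\top B_0^\top\mathbf e_{i_k})^{\otimes 2}.$$ In particular, $\mathrm{rank}(\Theta_k-\Theta_0)=1$ if $i_k$ is a source node of $\mathcal G$, and $\mathrm{rank}(\Theta_k-\Theta_0)=2$ otherwise.
   Context: Notation: $[d]=\{1,\dots,d\}$, $\mathbf e_i$ standard basis vectors, $\mathbf v^{\otimes 2}:=\mathbf v\mathbf v^\top$, $M^\dagger$ the Moore–Penrose pseudoinverse. Assumption A (model). $\mathcal G$ is a DAG on $[d]$ whose nodes are ordered so that every edge $j\to i$ has $j>i$; a source node has no parents. Contexts $k\in\{0\}\cup[K]$. For each $k$, $A_k\in\mathbb R^{d\times d}$ has zero diagonal and $(A_k)_{ij}=0$ unless $j\to i$ is an edge of $\mathcal G$, and $(A_0)_{ij}\neq 0$ iff $j\to i$ is an edge; $\Omega_k$ is diagonal with positive diagonal; $B_k:=\Omega_k^{-1/2}(I_d-A_k)$. In context $k$, $Z=B_k^{-1}\varepsilon$ with $\mathrm{Cov}(\varepsilon)=I_d$. For each $k\in[K]$ there exist $i_k\in[d]$ and $\mathbf c_k\in\mathbb R^d$ with $B_k=B_0+\mathbf e_{i_k}\mathbf c_k^\top$, and $B_k^\top\mathbf e_{i_k}$ is not a scalar multiple of $B_0^\top\mathbf e_{i_k}$ unless $i_k$ is a source. $G\in\mathbb R^{p\times d}$ ($p\ge d$) has rank $d$, $X=GZ$ in every context, $H:=G^\dagger\in\mathbb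 R^{d\times p}$, normalized so that in each row of $H$ the maximum absolute value of the entries is $1$ and the leftmost entry of absolute value $1$ equals $1$. The precision matrices are $\Theta_k:=\mathbb E[XX^\top]^\dagger=H^\top B_k^\top B_kH$. *)

theory Defs
  imports "HOL-Analysis.Analysis"
begin

definition outer2 :: "real^'n \<Rightarrow> real^'n^'n" where
  "outer2 v = (\<chi> a b. v $ a * v $ b)"

definition penrose_pinv :: "real^'d^'p \<Rightarrow> real^'p^'d \<Rightarrow> bool" where
  "penrose_pinv G H \<longleftrightarrow>
     G ** H ** G = G \<and> H ** G ** H = H \<and>
     transpose (G ** H) = G ** H \<and> transpose (H ** G) = H ** G"

definition inv_sqrt_diag :: "real^'d^'d \<Rightarrow> real^'d^'d" where
  "inv_sqrt_diag W = (\<chi> i j. if i = j then 1 / sqrt (W $ i $ i) else 0)"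

definition Bmat :: "real^'d^'d \<Rightarrow> real^'d^'d \<Rightarrow> real^'d^'d" where
  "Bmat W A = inv_sqrt_diag W ** (mat 1 - A)"

text \<open>A node is a source iff it has no parents; (j,i) \<in> E encodes the edge j \<rightarrow> i.\<close>
definition is_source :: "('d \<times> 'd) set \<Rightarrow> 'd \<Rightarrow> bool" where
  "is_source E i \<longleftrightarrow> \<not> (\<exists>j. (j, i) \<in> E)"

definition row_normalized :: "real^('p::{finite,wellorder})^'d \<Rightarrow> bool" where
  "row_normalized H \<longleftrightarrow> (\<forall>r.
     (\<forall>q. \<bar>H $ r $ q\<bar> \<le> 1) \<and> (\<exists>q. \<bar>H $ r $ q\<bar> = 1) \<and>
     H $ r $ (LEAST q. \<bar>H $ r $ q\<bar> = 1) = 1)"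

definition basis_outer :: "'d \<Rightarrow> real^'d \<Rightarrow> real^'d^'d" where
  "basis_outer i c = (\<chi> a b. if a = i then c $ b else 0)"

end

theory Submission
  imports Defs
begin

lemma outer2_diff_mulv:
  fixes x y z :: "real^'n"
  shows "(outer2 x - outer2 y) *v z = (x \<bullet> z) *\<^sub>R x - (y \<bullet> z) *\<^sub>R y"
  by (simp add: vec_eq_iff outer2_def matrix_vector_mult_def inner_vec_def
        sum_distrib_left sum_distrib_right algebra_simps sum_subtractf)

lemma rank_outer2_indep:
  fixes x y :: "real^'n"
  assumes ny: "y \<noteq> 0" and ns: "\<And>s. x \<noteq> s *\<^sub>R y"
  shows "rank (outer2 x - outer2 y) = 2"
proof -
  have nx: "x \<noteq> 0" using ns[of 0] by simp
  have xy: "x \<noteq> y" using ns[of 1] by simp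
  let ?M = "outer2 x - outer2 y"
  define D where "D = (x \<bullet> x) * (y \<bullet> y) - (x \<bullet> y)^2"
  have D: "D > 0"
  proof -
    have "\<bar>x \<bullet> y\<bar> \<le> norm x * norm y" by (rule Cauchy_Schwarz_ineq2)
    moreover have "\<bar>x \<bullet> y\<bar> \<noteq> norm x * norm y"
    proof
      assume "\<bar>x \<bullet> y\<bar> = norm x * norm y"
      then have "norm x *\<^sub>R y = norm y *\<^sub>R x \<or> norm x *\<^sub>R y = - norm y *\<^sub>R x"
        using norm_cauchy_schwarz_abs_eq by blast
      moreover have "x = (1 / norm y) *\<^sub>R (norm y *\<^sub>R x)" using ny by simp
      ultimately have "x = (1 / norm y) *\<^sub>R (norm x *\<^sub>R y) \<or> x = (1 / norm y) *\<^sub>R (- norm x *\<^sub>R y)"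
        by (metis minus_minus scaleR_minus_left)
      then have "x = (norm x / norm y) *\<^sub>R y \<or> x = (- norm x / norm y) *\<^sub>R y"
        by simp
      then show False using ns by blast
    qed
    ultimately have "\<bar>x \<bullet> y\<bar> < norm x * norm y" by simp
    then have "\<bar>x \<bullet> y\<bar>^2 < (norm x * norm y)^2"
      by (intro power_strict_mono) auto
    then show ?thesis unfolding D_def
      by (simp add: power_mult_distrib dot_square_norm power2_eq_square mult_ac)
  qed
  have r: "range ((*v) ?M) = span {x, y}"
  proof
    show "range ((*v) ?M) \<subseteq> span {x, y}"
      unfolding outer2_diff_mulv image_subset_iff by (metis span_diff span_mul span_base insertI1 insertI2 singletonI)
    show "span {x, y} \<subseteq> range ((*v) ?M)"
    proof (rule span_minimal)
      show "subspace (range ((*v) ?M))"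
        by (rule linear_subspace_image[OF matrix_vector_mul_linear subspace_UNIV])
      define z1 where "z1 = (1/D) *\<^sub>R ((y \<bullet> y) *\<^sub>R x - (x \<bullet> y) *\<^sub>R y)"
      define z2 where "z2 = (1/D) *\<^sub>R ((x \<bullet> y) *\<^sub>R x - (x \<bullet> x) *\<^sub>R y)"
      have D0: "D \<noteq> 0" using D by simp
      have "x \<bullet> z1 = (1/D) * ((y \<bullet> y) * (x \<bullet> x) - (x \<bullet> y) * (x \<bullet> y))"
        "y \<bullet> z1 = (1/D) * ((y \<bullet> y) * (x \<bullet> y) - (x \<bullet> y) * (y \<bullet> y))"
        "x \<bullet> z2 = (1/D) * ((x \<bullet> y) * (x \<bullet> x) - (x \<bullet> x) * (x \<bullet> y))"
        "y \<bullet> z2 = (1/D) * ((x \<bullet> y) * (x \<bullet> y) - (x \<bullet> x) * (y \<bullet> y))"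
        unfolding z1_def z2_def by (simp_all add: inner_diff_right inner_commute)
      moreover have "(y \<bullet> y) * (x \<bullet> x) - (x \<bullet> y) * (x \<bullet> y) = D"
        "(x \<bullet> y) * (x \<bullet> y) - (x \<bullet> x) * (y \<bullet> y) = - D"
        unfolding D_def by (simp_all add: power2_eq_square)
      ultimately have i: "x \<bullet> z1 = 1" "y \<bullet> z1 = 0" "x \<bullet> z2 = 0" "y \<bullet> z2 = -1"
        using D0 by simp_all
      have "?M *v z1 = x" unfolding outer2_diff_mulv using i by simp
      moreover have "?M *v z2 = y" unfolding outer2_diff_mulv using i by simp
      ultimately show "{x, y} \<subseteq> range ((*v) ?M)" by (metis empty_subsetI insert_subset rangeI)
    qed
  qed
  have ind: "independent {x, y}"
    using ny nx xy ns by (auto simp: independent_insert span_singleton)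
  show ?thesis
    unfolding rank_dim_range r dim_span using dim_eq_card_independent[OF ind] xy by simp
qed

lemma rank_outer2_single:
  fixes w :: "real^'n"
  assumes "w \<noteq> 0" "a \<noteq> 0"
  shows "rank (a *\<^sub>R outer2 w) = 1"
proof -
  have "range ((*v) (a *\<^sub>R outer2 w)) = span {w}"
  proof
    have e: "(a *\<^sub>R outer2 w) *v z = (a * (w \<bullet> z)) *\<^sub>R w" for z
      by (simp add: vec_eq_iff outer2_def matrix_vector_mult_def inner_vec_def
        sum_distrib_left sum_distrib_right algebra_simps)
    show "range ((*v) (a *\<^sub>R outer2 w)) \<subseteq> span {w}"
      unfolding e image_subset_iff by (metis span_mul span_base singletonI)
    show "span {w} \<subseteq> range ((*v) (a *\<^sub>R outer2 w))"
    proof (rule span_minimal)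
      show "subspace (range ((*v) (a *\<^sub>R outer2 w)))"
        by (rule linear_subspace_image[OF matrix_vector_mul_linear subspace_UNIV])
      have "(a *\<^sub>R outer2 w) *v ((1/(a * (w \<bullet> w))) *\<^sub>R w) = w"
        using assms by (simp add: e)
      then show "{w} \<subseteq> range ((*v) (a *\<^sub>R outer2 w))" by (metis empty_subsetI insert_subset rangeI)
    qed
  qed
  then show ?thesis using assms unfolding rank_dim_range by simp
qed


lemma row_vec: "transpose (B::real^'n^'n) *v axis i 1 = B $ i"
  by (simp add: vec_eq_iff matrix_vector_mult_def transpose_def axis_def if_distrib cong: if_cong)

lemma gram_update:
  fixes B0 :: "real^'n^'n"
  shows "transpose (B0 + basis_outer i c) ** (B0 + basis_outer i c) - transpose B0 ** B0
       = outer2 ((B0 + basis_outer i c) $ i) - outer2 (B0 $ i)"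
proof -
  have "(\<Sum>r\<in>UNIV. (B0$r$a + (if r = i then c$a else 0)) * (B0$r$b + (if r = i then c$b else 0)))
      - (\<Sum>r\<in>UNIV. B0$r$a * B0$r$b)
      = (B0$i$a + c$a) * (B0$i$b + c$b) - B0$i$a * B0$i$b" for a b
  proof -
    have "(\<Sum>r\<in>UNIV. (B0$r$a + (if r = i then c$a else 0)) * (B0$r$b + (if r = i then c$b else 0)))
      - (\<Sum>r\<in>UNIV. B0$r$a * B0$r$b)
      = (\<Sum>r\<in>UNIV. (B0$r$a + (if r = i then c$a else 0)) * (B0$r$b + (if r = i then c$b else 0))
         - B0$r$a * B0$r$b)" by (simp add: sum_subtractf)
    also have "\<dots> = (\<Sum>r\<in>UNIV. if r = i then (B0$i$a + c$a) * (B0$i$b + c$b) - B0$i$a * B0$i$b else 0)"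
      by (rule sum.cong) auto
    finally show ?thesis by simp
  qed
  then show ?thesis
    by (simp add: vec_eq_iff matrix_matrix_mult_def transpose_def outer2_def basis_outer_def)
qed

lemma sandwich_outer2:
  fixes H :: "real^'p^'d" and w :: "real^'d"
  shows "transpose H ** outer2 w ** H = outer2 (transpose H *v w)"
  by (simp add: vec_eq_iff matrix_matrix_mult_def transpose_def outer2_def matrix_vector_mult_def
      sum_distrib_left sum_distrib_right mult_ac sum_product)

lemma sandwich_diff:
  fixes H :: "real^'p^'d" and X Y :: "real^'d^'d"
  shows "transpose H ** X ** H - transpose H ** Y ** H = transpose H ** (X - Y) ** H"
  by (simp add: vec_eq_iff matrix_matrix_mult_def sum_subtractf algebra_simps)

lemma outer2_scale: "outer2 (a *\<^sub>R w) - outer2 (b *\<^sub>R w) = (a^2 - b^2) *\<^sub>R outer2 (w::real^'n)"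
  by (simp add: vec_eq_iff outer2_def power2_eq_square algebra_simps)


theorem proposition1:
  fixes E :: "(('d::{finite,wellorder}) \<times> ('d::{finite,wellorder})) set"
    and K :: nat
    and A :: "nat \<Rightarrow> real^('d::{finite,wellorder})^('d::{finite,wellorder})"
    and \<Omega> :: "nat \<Rightarrow> real^('d::{finite,wellorder})^('d::{finite,wellorder})"
    and ik :: "nat \<Rightarrow> ('d::{finite,wellorder})"
    and c :: "nat \<Rightarrow> real^('d::{finite,wellorder})"
    and G :: "real^('d::{finite,wellorder})^('p::{finite,wellorder})"
    and H :: "real^('p::{finite,wellorder})^('d::{finite,wellorder})"
  defines "B \<equiv> (\<lambda>k. Bmat (\<Omega> k) (A k))"
    and "\<Theta> \<equiv> (\<lambda>k. transpose H ** transpose (Bmat (\<Omega> k) (A k)) ** Bmat (\<Omega> k) (A k) ** H)"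
  assumes topo: "\<And>j i. (j, i) \<in> E \<Longrightarrow> j > i"
    and A_diag: "\<And>k i. k \<le> K \<Longrightarrow> A k $ i $ i = 0"
    and A_supp: "\<And>k i j. k \<le> K \<Longrightarrow> (j, i) \<notin> E \<Longrightarrow> A k $ i $ j = 0"
    and A0_supp: "\<And>i j. A 0 $ i $ j \<noteq> 0 \<longleftrightarrow> (j, i) \<in> E"
    and Omega_diag: "\<And>k i j. k \<le> K \<Longrightarrow> i \<noteq> j \<Longrightarrow> \<Omega> k $ i $ j = 0"
    and Omega_pos: "\<And>k i. k \<le> K \<Longrightarrow> \<Omega> k $ i $ i > 0"
    and interv: "\<And>k. k \<in> {1..K} \<Longrightarrow> B k = B 0 + basis_outer (ik k) (c k)"
    and nonscalar: "\<And>k. k \<in> {1..K} \<Longrightarrow> \<not> is_source E (ik k) \<Longrightarrow>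
        \<not> (\<exists>s::real. transpose (B k) *v axis (ik k) 1 = s *\<^sub>R (transpose (B 0) *v axis (ik k) 1))"
    and genuine: "\<And>k. k \<in> {1..K} \<Longrightarrow> B k \<noteq> B 0"
    and p_ge_d: "CARD('d) \<le> CARD('p)"
    and G_rank: "rank G = CARD('d)"
    and H_pinv: "penrose_pinv G H"
    and H_norm: "row_normalized H"
  shows "\<forall>k \<in> {1..K}.
     \<Theta> k - \<Theta> 0 = outer2 (transpose H *v (transpose (B k) *v axis (ik k) 1))
                   - outer2 (transpose H *v (transpose (B 0) *v axis (ik k) 1))
     \<and> rank (\<Theta> k - \<Theta> 0) = (if is_source E (ik k) then 1 else 2)"
proof -
  note B_def = assms(1) and Th_def = assms(2)
  have rankH: "rank H = CARD('d)"
  proof -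
    have "rank G = rank ((G ** H) ** G)" using H_pinv unfolding penrose_pinv_def by simp
    also have "\<dots> \<le> rank (G ** H)" by (rule rank_mul_le_left)
    also have "\<dots> \<le> rank H" by (rule rank_mul_le_right)
    finally show ?thesis using G_rank rank_bound[of H] by simp
  qed
  have injHt: "inj ((*v) (transpose H))"
    using rankH by (simp add: full_rank_injective[symmetric] rank_transpose)
  have Bent: "B k $ i $ j = (1 / sqrt (\<Omega> k $ i $ i)) * ((if i = j then 1 else 0) - A k $ i $ j)" for k i j
  proof -
    have "B k $ i $ j = (\<Sum>l\<in>UNIV. (if i = l then 1 / sqrt (\<Omega> k $ i $ i) else 0) * ((mat 1 - A k) $ l $ j))"
      unfolding B_def Bmat_def inv_sqrt_diag_def by (simp add: matrix_matrix_mult_def)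
    also have "\<dots> = (\<Sum>l\<in>UNIV. if l = i then 1 / sqrt (\<Omega> k $ i $ i) * ((mat 1 - A k) $ i $ j) else 0)"
      by (rule sum.cong) auto
    finally show ?thesis by (simp add: mat_def)
  qed
  show ?thesis
  proof
    fix k assume k: "k \<in> {1..K}"
    then have kK: "k \<le> K" by simp
    define i where "i = ik k"
    define u where "u = transpose (B k) *v axis i 1"
    define v where "v = transpose (B 0) *v axis i 1"
    have Bk: "B k = B 0 + basis_outer i (c k)" using interv[OF k] i_def by simp
    have uv: "u = B k $ i" "v = B 0 $ i" unfolding u_def v_def by (simp_all only: row_vec)
    have Thk: "\<Theta> m = transpose H ** (transpose (B m) ** B m) ** H" for m
      unfolding Th_def B_def by (simp add: matrix_mul_assoc)
    have eq: "\<Theta> k - \<Theta> 0 = outer2 (transpose H *v u) - outer2 (transpose H *v v)"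
    proof -
      have "\<Theta> k - \<Theta> 0 = transpose H ** (transpose (B k) ** B k - transpose (B 0) ** B 0) ** H"
        unfolding Thk by (rule sandwich_diff)
      also have "transpose (B k) ** B k - transpose (B 0) ** B 0 = outer2 u - outer2 v"
        unfolding uv Bk by (rule gram_update)
      also have "transpose H ** (outer2 u - outer2 v) ** H
          = transpose H ** outer2 u ** H - transpose H ** outer2 v ** H"
        by (rule sandwich_diff[symmetric])
      finally show ?thesis by (simp only: sandwich_outer2)
    qed
    have ui: "u $ i = 1 / sqrt (\<Omega> k $ i $ i)" "v $ i = 1 / sqrt (\<Omega> 0 $ i $ i)"
      unfolding uv Bent using A_diag kK by auto
    have upos: "u $ i > 0" "v $ i > 0" unfolding ui using Omega_pos kK by auto
    have ukv: "u = v + c k" unfolding uv Bk by (simp add: vec_eq_iff basis_outer_def)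
    have rk: "rank (\<Theta> k - \<Theta> 0) = (if is_source E i then 1 else 2)"
    proof (cases "is_source E i")
      case True
      have noedge: "(j, i) \<notin> E" for j using True unfolding is_source_def by blast
      have ue: "u = u $ i *\<^sub>R axis i 1" "v = v $ i *\<^sub>R axis i 1"
        unfolding uv using Bent A_supp[OF kK noedge] A_supp[of 0, OF _ noedge]
        by (auto simp: vec_eq_iff axis_def ui[unfolded uv])
      define w where "w = transpose H *v axis i 1"
      have w0: "w \<noteq> 0" unfolding w_def using injHt
        by (metis axis_eq_0_iff matrix_vector_mult_0_right injD zero_neq_one)
      have "u \<noteq> v"
      proof
        assume "u = v"
        then have "c k = 0" using ukv by simp
        then have "B k = B 0" unfolding Bk by (simp add: vec_eq_iff basis_outer_def)
        then show False using genuine[OF k] by simp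
      qed
      then have "u $ i \<noteq> v $ i" using ue by metis
      then have ne: "(u $ i)^2 - (v $ i)^2 \<noteq> 0" using upos
        by (metis eq_iff_diff_eq_0 less_eq_real_def power2_eq_iff_nonneg)
      have "\<Theta> k - \<Theta> 0 = ((u $ i)^2 - (v $ i)^2) *\<^sub>R outer2 w"
      proof -
        have "transpose H *v u = (u $ i) *\<^sub>R w" unfolding w_def
          by (subst ue(1)) (rule matrix_vector_mult_scaleR)
        moreover have "transpose H *v v = (v $ i) *\<^sub>R w" unfolding w_def
          by (subst ue(2)) (rule matrix_vector_mult_scaleR)
        ultimately show ?thesis unfolding eq by (simp only: outer2_scale)
      qed
      then show ?thesis using rank_outer2_single[OF w0 ne] True by simp
    next
      case False
      have ns: "\<And>s. u \<noteq> s *\<^sub>R v" using nonscalar[OF k] False unfolding i_def u_def v_def by blast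
      have v0: "v \<noteq> 0" using upos by auto
      have y0: "transpose H *v v \<noteq> 0" using injHt v0
        by (metis matrix_vector_mult_0_right injD)
      have "transpose H *v u \<noteq> s *\<^sub>R (transpose H *v v)" for s
      proof
        assume "transpose H *v u = s *\<^sub>R (transpose H *v v)"
        then have "transpose H *v u = transpose H *v (s *\<^sub>R v)" by (simp add: matrix_vector_mult_scaleR)
        then have "u = s *\<^sub>R v" using injHt by (metis injD)
        then show False using ns by blast
      qed
      then show ?thesis unfolding eq using rank_outer2_indep[OF y0] False by simp
    qed
    show "\<Theta> k - \<Theta> 0 = outer2 (transpose H *v (transpose (B k) *v axis (ik k) 1))
                   - outer2 (transpose H *v (transpose (B 0) *v axis (ik k) 1))
     \<and> rank (\<Theta> k - \<Theta> 0) = (if is_source E (ik k) then 1 else 2)"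
      using eq rk unfolding u_def v_def i_def by simp
  qed
qed

end
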